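(* Let $\mathcal{P}$ be a property of unordered partial systems that is monotone increasing (if $S\in\mathcal{P}$ and $S'\supseteq S$ then $S'\in\mathcal{P}$). Fix $\alpha\in(0,1)$ and $S\in\mathcal{O}_m$ for some $m\le N-\alpha N$. Let $\mathbf{S}$ have distribution $\mathbb{R}(S,\alpha N)$ and $\mathbf{S}^*$ have distribution $\mathbb{G}^*(S,\alpha/n)$. Then \[ \Pr\left(S\cup\mathbf{S}\notin\mathcal{P}\right)=O(1)\Pr\left(S\cup\mathbf{S}^*\notin\mathcal{P}\right), \] where $S\cup S'$ denotes the unordered partial system consisting of the hyperedges of $S$ and of $S'$.
   Context: Throughout, $n\equiv1$ or $3\pmod 6$, $N=\binom n2/3$, $\alpha N$ is treated as an integer and asymptotics are as $n\to\infty$. A partial system is a 3-uniform hypergraph on $[n]$ in which every pair of vertices lies in at most one hyperedge; $\mathcal{O}_m$ is the set of ordered partial systems with $m$ hyperedges. $G(S)$ is the graph on $[n]$ of pairs not contained in a hyperedge of $S$. For a partial system $S$, $\mathbb{G}(S,p)$ is the random 3-uniform hypergraph in which each triple not conflicting with $S$ (i.e. not intersecting a hyperedge of $S$ in at least 2 vertices, equivalently each triangle of $G(S)$) is included independently with probability $p$; $\mathbb{G}^*(S,p)$ is the partial system obtained from $\mathbb{G}(S,p)$ by deleting every hyperedge that intersects another hyperedge of it in at least 2 vertices. $\mathbb{R}(S,m)$ is the distribution of the partial system formed by the triangles removed in the first $m$ steps of the triangle removal process started from $G(S)$ (repeatedly deleting the edges of a uniformly random triangle of the current graph); if the process runs out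 of triangles before $m$ steps its output is the symbol $*$. Conventions: $*$ is a superset of every partial system, $*\in\mathcal{P}$, and $S\cup *=*$. *)

theory Defs
  imports "HOL-Probability.Probability"
begin

text \<open>Vertex set [n] is rendered as {..<n}. Hyperedges and graph edges are finite sets of vertices.\<close>

definition N_of :: "nat \<Rightarrow> real" where
  "N_of n = real (n choose 2) / 3"

definition partial_system :: "nat \<Rightarrow> nat set set \<Rightarrow> bool" where
  "partial_system n H \<longleftrightarrow>
     (\<forall>T\<in>H. T \<subseteq> {..<n} \<and> card T = 3) \<and>
     (\<forall>T\<in>H. \<forall>T'\<in>H. T \<noteq> T' \<longrightarrow> card (T \<inter> T') \<le> 1)"

definition ordered_systems :: "nat \<Rightarrow> nat \<Rightarrow> nat set list set" where
  "ordered_systems n m = {L. length L = m \<and> distinct L \<and> partial_system n (set L)}"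

definition pairs_of :: "nat set \<Rightarrow> nat set set" where
  "pairs_of T = {e. e \<subseteq> T \<and> card e = 2}"

definition graph_of :: "nat \<Rightarrow> nat set set \<Rightarrow> nat set set" where
  "graph_of n S = {e. e \<subseteq> {..<n} \<and> card e = 2 \<and> \<not> (\<exists>T\<in>S. e \<subseteq> T)}"

definition triangles :: "nat set set \<Rightarrow> nat set set" where
  "triangles E = {T. card T = 3 \<and> pairs_of T \<subseteq> E}"

text \<open>Triangle removal process run for k steps from graph E; None plays the role of the symbol *.\<close>
fun trp :: "nat set set \<Rightarrow> nat \<Rightarrow> nat set list option pmf" where
  "trp E 0 = return_pmf (Some [])"
| "trp E (Suc k) =
     (if triangles E = {} then return_pmf None
      else pmf_of_set (triangles E) \<bind>
             (\<lambda>T. map_pmf (map_option (Cons T)) (trp (E - pairs_of T) k)))"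

definition R_dist :: "nat \<Rightarrow> nat set list \<Rightarrow> nat \<Rightarrow> nat set list option pmf" where
  "R_dist n S m = trp (graph_of n (set S)) m"

definition G_dist :: "nat \<Rightarrow> nat set list \<Rightarrow> real \<Rightarrow> nat set set pmf" where
  "G_dist n S p =
     map_pmf (\<lambda>f. {T \<in> triangles (graph_of n (set S)). f T})
       (Pi_pmf (triangles (graph_of n (set S))) False (\<lambda>_. bernoulli_pmf p))"

definition delete_conflicts :: "nat set set \<Rightarrow> nat set set" where
  "delete_conflicts H = {T \<in> H. \<forall>T'\<in>H. T' \<noteq> T \<longrightarrow> card (T \<inter> T') \<le> 1}"

definition Gstar_dist :: "nat \<Rightarrow> nat set list \<Rightarrow> real \<Rightarrow> nat set set pmf" where
  "Gstar_dist n S p = map_pmf delete_conflicts (G_dist n S p)"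

fun sys_union :: "nat set list \<Rightarrow> nat set list option \<Rightarrow> nat set set option" where
  "sys_union S None = None"
| "sys_union S (Some L) = Some (set S \<union> set L)"

text \<open>Monotone increasing property of unordered partial systems on [n] (None = *, which is in P).\<close>
definition monotone_increasing :: "nat \<Rightarrow> (nat set set option \<Rightarrow> bool) \<Rightarrow> bool" where
  "monotone_increasing n P \<longleftrightarrow> P None \<and>
     (\<forall>A B. partial_system n A \<longrightarrow> partial_system n B \<longrightarrow> A \<subseteq> B \<longrightarrow> P (Some A) \<longrightarrow> P (Some B))"

end

theory Submission
  imports Defs
begin

fun greedy :: "nat set set \<Rightarrow> nat set list \<Rightarrow> nat \<Rightarrow> nat set list option" where
  "greedy E xs 0 = Some []"
| "greedy E [] (Suc k) = None"
| "greedy E (T#xs) (Suc k) = (if T \<in> triangles E then map_option (Cons T) (greedy (E - pairs_of T) xs k)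
     else greedy E xs (Suc k))"

lemma pairs_nonempty: "card T = 3 \<Longrightarrow> pairs_of T \<noteq> {}"
proof -
  assume "card T = 3"
  then obtain x y z where "T = {x,y,z}" "x \<noteq> y" by (auto simp: card_3_iff)
  then have "{x,y} \<in> pairs_of T" by (auto simp: pairs_of_def)
  then show ?thesis by auto
qed

lemma triangles_mono: "E' \<subseteq> E \<Longrightarrow> triangles E' \<subseteq> triangles E"
  by (auto simp: triangles_def)

lemma tri_not_after: "T \<in> triangles E \<Longrightarrow> T \<notin> triangles (E - pairs_of T)"
  using pairs_nonempty by (fastforce simp: triangles_def)

lemma greedy_empty_tri: "triangles E = {} \<Longrightarrow> greedy E xs (Suc k) = None"
proof (induction xs)
  case Nil then show ?case by simp
next
  case (Cons a xs) then show ?case by simp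
qed

lemma trp_greedy:
  assumes "finite A" "triangles E \<subseteq> A"
  shows "trp E k = map_pmf (\<lambda>\<pi>. greedy E \<pi> k) (pmf_of_set (permutations_of_set A))"
  using assms
proof (induction "card A" arbitrary: A E k rule: less_induct)
  case less
  show ?case
  proof (cases k)
    case 0 then show ?thesis by (simp add: map_pmf_const)
  next
    case (Suc j)
    show ?thesis
    proof (cases "A = {}")
      case True
      then have "triangles E = {}" using less by auto
      then show ?thesis using True Suc by (simp add: pmf_of_set_singleton)
    next
      case False
      define g where "g = (\<lambda>\<pi>. greedy E \<pi> k)"
      define h where "h = (\<lambda>x. if x \<in> triangles E then map_pmf (map_option (Cons x)) (trp (E - pairs_of x) j)
                          else trp E k)"
      have "map_pmf g (pmf_of_set (permutations_of_set A)) =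
          pmf_of_set A \<bind> (\<lambda>x. map_pmf (\<lambda>xs. g (x#xs)) (pmf_of_set (permutations_of_set (A - {x}))))"
        using less False by (simp add: random_permutation_of_set map_bind_pmf map_pmf_def bind_assoc_pmf bind_return_pmf)
      also have "\<dots> = pmf_of_set A \<bind> h"
      proof (rule bind_pmf_cong, simp)
        fix x assume "x \<in> set_pmf (pmf_of_set A)"
        then have xA: "x \<in> A" using less False by simp
        have cA: "card (A - {x}) < card A" using xA less by (meson card_Diff1_less)
        show "map_pmf (\<lambda>xs. g (x#xs)) (pmf_of_set (permutations_of_set (A - {x}))) = h x"
        proof (cases "x \<in> triangles E")
          case True
          have sub: "triangles (E - pairs_of x) \<subseteq> A - {x}"
            using triangles_mono[of "E - pairs_of x" E] tri_not_after[OF True] less by auto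
          have "trp (E - pairs_of x) j = map_pmf (\<lambda>\<pi>. greedy (E - pairs_of x) \<pi> j) (pmf_of_set (permutations_of_set (A - {x})))"
            using less(1)[OF cA _ sub] less by auto
          then show ?thesis using True by (simp add: g_def h_def Suc pmf.map_comp o_def)
        next
          case False
          have sub: "triangles E \<subseteq> A - {x}" using False less by auto
          have "trp E k = map_pmf (\<lambda>\<pi>. greedy E \<pi> k) (pmf_of_set (permutations_of_set (A - {x})))"
            using less(1)[OF cA _ sub] less by auto
          then show ?thesis using False by (simp add: g_def h_def Suc)
        qed
      qed
      also have "\<dots> = trp E k"
      proof (cases "triangles E = {}")
        case True
        then show ?thesis by (simp add: h_def bind_pmf_const)
      next
        case nE: False
        have fT: "finite (triangles E)" using less finite_subset by blast
        have tk: "trp E k = pmf_of_set (triangles E) \<bind> (\<lambda>x. map_pmf (map_option (Cons x)) (trp (E - pairs_of x) j))"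
          using nE Suc by simp
        show ?thesis
        proof (rule pmf_eqI)
          fix y
          let ?s = "\<lambda>x. pmf (map_pmf (map_option (Cons x)) (trp (E - pairs_of x) j)) y"
          have 1: "(\<Sum>x\<in>triangles E. ?s x) = card (triangles E) * pmf (trp E k) y"
            using tk nE fT by (simp add: pmf_bind_pmf_of_set)
          have "(\<Sum>x\<in>A. pmf (h x) y) = (\<Sum>x\<in>triangles E. pmf (h x) y) + (\<Sum>x\<in>A - triangles E. pmf (h x) y)"
            using less by (metis sum.subset_diff add.commute)
          also have "\<dots> = (\<Sum>x\<in>triangles E. ?s x) + (\<Sum>x\<in>A - triangles E. pmf (trp E k) y)"
            by (simp add: h_def)
          also have "\<dots> = card A * pmf (trp E k) y"
            using 1 less fT by (simp add: card_Diff_subset algebra_simps of_nat_diff card_mono)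
          finally have "(\<Sum>x\<in>A. pmf (h x) y) = card A * pmf (trp E k) y" .
          then show "pmf (pmf_of_set A \<bind> h) y = pmf (trp E k) y"
            using less False by (simp add: pmf_bind_pmf_of_set)
        qed
      qed
      finally show ?thesis by (simp add: g_def)
    qed
  qed
qed



lemma greedy_props:
  "greedy E \<pi> k = Some L \<Longrightarrow> set L \<subseteq> triangles E \<and>
     (\<forall>T\<in>set L. \<forall>T'\<in>set L. T \<noteq> T' \<longrightarrow> pairs_of T \<inter> pairs_of T' = {})"
proof (induction E \<pi> k arbitrary: L rule: greedy.induct)
  case (1 E xs) then show ?case by auto
next
  case (2 E k) then show ?case by auto
next
  case (3 E T xs k)
  show ?case
  proof (cases "T \<in> triangles E")
    case True
    with "3.prems" obtain L' where L: "L = T # L'" "greedy (E - pairs_of T) xs k = Some L'" by auto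
    from "3.IH"(1)[OF True L(2)] have ih: "set L' \<subseteq> triangles (E - pairs_of T)"
      "\<forall>T\<in>set L'. \<forall>T'\<in>set L'. T \<noteq> T' \<longrightarrow> pairs_of T \<inter> pairs_of T' = {}" by auto
    have "set L' \<subseteq> triangles E" using ih(1) triangles_mono[of "E - pairs_of T" E] by auto
    moreover have "\<forall>T'\<in>set L'. pairs_of T' \<inter> pairs_of T = {}"
      using ih(1) by (auto simp: triangles_def)
    moreover have "\<forall>T'\<in>set L'. pairs_of T \<inter> pairs_of T' = {}"
      using calculation(2) by blast
    ultimately show ?thesis using True ih(2) L(1) by auto
  next
    case False
    then have "greedy E xs (Suc k) = Some L" using "3.prems" by simp
    then show ?thesis using "3.IH"(2)[OF False] by blast
  qed
qed

lemma two_subset: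
  assumes "finite X" "card X \<ge> 2" shows "\<exists>e\<subseteq>X. card e = 2"
proof -
  have "X \<noteq> {}" using assms by auto
  then obtain a where a: "a \<in> X" by blast
  have "card (X - {a}) \<ge> 1" using assms a by auto
  then have "X - {a} \<noteq> {}" by (metis card.empty not_one_le_zero)
  then obtain b where "b \<in> X - {a}" by blast
  then show ?thesis using a by (intro exI[of _ "{a,b}"]) auto
qed

lemma card_le1_pairs:
  assumes "finite T" "card (T \<inter> T') \<le> 1" shows "pairs_of T \<inter> pairs_of T' = {}"
proof (rule ccontr)
  assume "pairs_of T \<inter> pairs_of T' \<noteq> {}"
  then obtain e where "e \<subseteq> T \<inter> T'" "card e = 2" by (auto simp: pairs_of_def)
  then have "card e \<le> card (T \<inter> T')" using assms by (intro card_mono) auto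
  then show False using assms \<open>card e = 2\<close> by simp
qed

lemma pairs_card_le1:
  assumes "finite T" "pairs_of T \<inter> pairs_of T' = {}" shows "card (T \<inter> T') \<le> 1"
proof (rule ccontr)
  assume "\<not> card (T \<inter> T') \<le> 1"
  then obtain e where "e \<subseteq> T \<inter> T'" "card e = 2" using two_subset[of "T \<inter> T'"] assms by auto
  then show False using assms by (auto simp: pairs_of_def)
qed

lemma greedy_key:
  "greedy E \<pi> M = Some L \<Longrightarrow> k \<le> M \<Longrightarrow> T \<in> set (take k \<pi>) \<Longrightarrow> T \<in> triangles E \<Longrightarrow>
   (\<forall>T'\<in>set (take k \<pi>). T' \<noteq> T \<longrightarrow> card (T \<inter> T') \<le> 1) \<Longrightarrow> T \<in> set L"
proof (induction \<pi> arbitrary: E M k L)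
  case Nil then show ?case by simp
next
  case (Cons U rest)
  obtain k' where k: "k = Suc k'" using Cons(4) by (cases k) auto
  obtain M' where M: "M = Suc M'" using Cons(3) k by (cases M) auto
  have fT: "finite T" using Cons(5) by (auto simp: triangles_def card_ge_0_finite)
  show ?case
  proof (cases "U \<in> triangles E")
    case True
    with Cons(2) M obtain L' where L: "L = U # L'" "greedy (E - pairs_of U) rest M' = Some L'" by auto
    show ?thesis
    proof (cases "T = U")
      case True then show ?thesis using L by simp
    next
      case False
      then have Tin: "T \<in> set (take k' rest)" using Cons(4) k by auto
      have "card (T \<inter> U) \<le> 1" using Cons(6) False k by auto
      then have "pairs_of T \<inter> pairs_of U = {}" using card_le1_pairs fT by blast
      then have "T \<in> triangles (E - pairs_of U)" using Cons(5) by (auto simp: triangles_def)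
      moreover have "\<forall>T'\<in>set (take k' rest). T' \<noteq> T \<longrightarrow> card (T \<inter> T') \<le> 1"
        using Cons(6) k by auto
      ultimately have "T \<in> set L'" using Cons.IH[OF L(2) _ Tin] Cons(3) k M by auto
      then show ?thesis using L by simp
    qed
  next
    case False
    then have "T \<noteq> U" using Cons(5) by auto
    then have Tin: "T \<in> set (take k' rest)" using Cons(4) k by auto
    have g: "greedy E rest M = Some L" using Cons(2) False M by simp
    show ?thesis using Cons.IH[OF g _ Tin Cons(5)] Cons(3,6) k by auto
  qed
qed

lemma tri_graph_sub:
  assumes "T \<in> triangles (graph_of n S)" shows "T \<subseteq> {..<n}"
proof
  fix v assume v: "v \<in> T"
  have c: "card T = 3" using assms by (simp add: triangles_def)
  then have "card (T - {v}) = 2" using v by simp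
  then have "T - {v} \<noteq> {}" by (metis card.empty zero_neq_numeral)
  then obtain w where "w \<in> T" "w \<noteq> v" by blast
  then have "{v,w} \<in> pairs_of T" using v by (auto simp: pairs_of_def)
  then have "{v,w} \<in> graph_of n S" using assms by (auto simp: triangles_def)
  then show "v \<in> {..<n}" by (auto simp: graph_of_def)
qed

lemma partial_union:
  assumes ps: "partial_system n S" and sub: "set L \<subseteq> triangles (graph_of n S)"
    and dj: "\<forall>T\<in>set L. \<forall>T'\<in>set L. T \<noteq> T' \<longrightarrow> pairs_of T \<inter> pairs_of T' = {}"
  shows "partial_system n (S \<union> set L)"
  unfolding partial_system_def
proof (rule conjI; intro ballI impI)
  fix T assume "T \<in> S \<union> set L"
  then show "T \<subseteq> {..<n} \<and> card T = 3"
  proof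
    assume "T \<in> S" then show ?thesis using ps by (auto simp: partial_system_def)
  next
    assume "T \<in> set L" then have "T \<in> triangles (graph_of n S)" using sub by auto
    then show ?thesis using tri_graph_sub by (auto simp: triangles_def)
  qed
next
  fix T T' assume T: "T \<in> S \<union> set L" and T': "T' \<in> S \<union> set L" and ne: "T \<noteq> T'"
  have fin: "\<And>X. X \<in> S \<union> set L \<Longrightarrow> finite X"
    using ps sub by (auto simp: partial_system_def triangles_def card_ge_0_finite)
  have noS: "pairs_of X \<inter> pairs_of Y = {}" if XY: "X \<in> set L" "Y \<in> S" for X Y
  proof (rule ccontr)
    assume "pairs_of X \<inter> pairs_of Y \<noteq> {}"
    then obtain e where e: "e \<in> pairs_of X" "e \<subseteq> Y" by (auto simp: pairs_of_def)
    have "X \<in> triangles (graph_of n S)" using sub XY by auto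
    then have "e \<in> graph_of n S" using e by (auto simp: triangles_def)
    then show False using e XY by (auto simp: graph_of_def)
  qed
  show "card (T \<inter> T') \<le> 1"
  proof (cases "T \<in> S")
    case True
    show ?thesis
    proof (cases "T' \<in> S")
      case True then show ?thesis using \<open>T \<in> S\<close> ne ps by (auto simp: partial_system_def)
    next
      case False
      then have "T' \<in> set L" using T' by auto
      then have "card (T' \<inter> T) \<le> 1" using noS[OF _ \<open>T \<in> S\<close>] pairs_card_le1[OF fin[OF T']] by blast
      then show ?thesis by (metis Int_commute)
    qed
  next
    case False
    then have TL: "T \<in> set L" using T by auto
    show ?thesis
    proof (cases "T' \<in> S")
      case True then show ?thesis using noS[OF TL True] pairs_card_le1[OF fin[OF T]] by simp
    next
      case False
      then have "T' \<in> set L" using T' by auto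
      then have "pairs_of T \<inter> pairs_of T' = {}" using dj TL ne by blast
      then show ?thesis using pairs_card_le1[OF fin[OF T]] by blast
    qed
  qed
qed

lemma partial_mono: assumes "partial_system n B" "A \<subseteq> B" shows "partial_system n A"
  unfolding partial_system_def
proof (rule conjI)
  show "\<forall>T\<in>A. T \<subseteq> {..<n} \<and> card T = 3" using assms unfolding partial_system_def by (meson subsetD)
  show "\<forall>T\<in>A. \<forall>T'\<in>A. T \<noteq> T' \<longrightarrow> card (T \<inter> T') \<le> 1" using assms unfolding partial_system_def by (meson subsetD)
qed



definition bw :: "nat \<Rightarrow> real \<Rightarrow> nat \<Rightarrow> real" where
  "bw t p k = real (t choose k) * p^k * (1-p)^(t-k)"

lemma bsum0: "(\<Sum>k\<le>t. bw t p k) = 1"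
proof -
  have "(p + (1-p))^t = (\<Sum>k\<le>t. real (t choose k) * p^k * (1-p)^(t-k))"
    by (subst binomial_ring) simp
  then show ?thesis by (simp add: bw_def)
qed

lemma bw_Suc: "bw (Suc u) p (Suc k) * real (Suc k) = real (Suc u) * p * bw u p k"
proof -
  have h: "real (Suc k) * real (Suc u choose Suc k) = real (Suc u) * real (u choose k)"
    using Suc_times_binomial[of k u] by (metis of_nat_mult)
  have "bw (Suc u) p (Suc k) * real (Suc k) = (real (Suc k) * real (Suc u choose Suc k)) * p * (p^k * (1-p)^(u-k))"
    unfolding bw_def by (simp del: binomial_Suc_Suc of_nat_Suc add: mult_ac)
  also have "\<dots> = real (Suc u) * real (u choose k) * p * (p^k * (1-p)^(u-k))" by (simp only: h)
  also have "\<dots> = real (Suc u) * p * bw u p k" unfolding bw_def by (simp del: of_nat_Suc add: mult_ac)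
  finally show ?thesis .
qed

lemma bsum1: "(\<Sum>k\<le>t. bw t p k * real k) = real t * p"
proof (cases t)
  case 0 then show ?thesis by simp
next
  case (Suc u)
  have "(\<Sum>k\<le>t. bw t p k * real k) = (\<Sum>k\<le>u. bw (Suc u) p (Suc k) * real (Suc k))"
    unfolding Suc by (subst sum.atMost_Suc_shift) simp
  also have "\<dots> = (\<Sum>k\<le>u. real (Suc u) * p * bw u p k)" by (simp only: bw_Suc)
  also have "\<dots> = real (Suc u) * p" by (simp add: sum_distrib_left[symmetric] bsum0)
  finally show ?thesis using Suc by simp
qed

lemma bsum2: "(\<Sum>k\<le>t. bw t p k * (real k * (real k - 1))) = real t * (real t - 1) * p^2"
proof (cases t)
  case 0 then show ?thesis by simp
next
  case (Suc u)
  have "(\<Sum>k\<le>t. bw t p k * (real k * (real k - 1))) = (\<Sum>k\<le>u. bw (Suc u) p (Suc k) * real (Suc k) * real k)"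
    unfolding Suc by (subst sum.atMost_Suc_shift) (simp add: algebra_simps)
  also have "\<dots> = (\<Sum>k\<le>u. real (Suc u) * p * (bw u p k * real k))" by (simp only: bw_Suc mult.assoc)
  also have "\<dots> = real (Suc u) * p * (real u * p)" by (simp add: sum_distrib_left[symmetric] bsum1)
  finally show ?thesis using Suc by (simp add: power2_eq_square algebra_simps)
qed

lemma bw_nonneg: "0 \<le> p \<Longrightarrow> p \<le> 1 \<Longrightarrow> 0 \<le> bw t p k"
  by (simp add: bw_def)

lemma bsum_sq: "(\<Sum>k\<le>t. bw t p k * (real k - c)^2) = real t * p * (1-p) + (real t * p - c)^2"
proof -
  have pt: "bw t p k * (real k - c)^2 = bw t p k * (real k * (real k - 1)) + (1 - 2*c) * (bw t p k * real k) + c^2 * bw t p k" for k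
    by (simp add: power2_eq_square algebra_simps)
  have "(\<Sum>k\<le>t. bw t p k * (real k - c)^2) =
     (\<Sum>k\<le>t. bw t p k * (real k * (real k - 1))) + (\<Sum>k\<le>t. (1 - 2*c) * (bw t p k * real k)) + (\<Sum>k\<le>t. c^2 * bw t p k)"
    by (simp only: pt sum.distrib)
  also have "\<dots> = (\<Sum>k\<le>t. bw t p k * (real k * (real k - 1))) + (1 - 2*c) * (\<Sum>k\<le>t. bw t p k * real k) + c^2 * (\<Sum>k\<le>t. bw t p k)"
    by (simp only: sum_distrib_left)
  also have "\<dots> = real t * p * (1-p) + (real t * p - c)^2"
    by (simp only: bsum0 bsum1 bsum2) (simp add: power2_eq_square algebra_simps)
  finally show ?thesis .
qed

lemma binom_tail:
  assumes p: "0 \<le> p" "p \<le> 1" and d: "d > 0" and Md: "real M + 1 - real t * p \<ge> d"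
  shows "(\<Sum>k\<in>{k. k \<le> t \<and> k \<le> M}. bw t p k) \<ge> d^2 / (real t * p * (1-p) + d^2)"
proof -
  define V where "V = real t * p * (1-p)"
  define s where "s = V / d"
  have V0: "V \<ge> 0" using p by (simp add: V_def)
  have s0: "s \<ge> 0" using V0 d by (simp add: s_def)
  define c where "c = real t * p - s"
  have fin: "finite {k. k \<le> t}" by simp
  have split: "(\<Sum>k\<le>t. bw t p k) = (\<Sum>k\<in>{k. k \<le> t \<and> k \<le> M}. bw t p k) + (\<Sum>k\<in>{k. k \<le> t \<and> \<not> k \<le> M}. bw t p k)"
  proof -
    have "{..t} = {k. k \<le> t \<and> k \<le> M} \<union> {k. k \<le> t \<and> \<not> k \<le> M}" by auto
    then show ?thesis by (simp add: sum.union_disjoint[symmetric] disjoint_iff)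
  qed
  have dpos: "(d + s)^2 > 0" using d s0 by simp
  have tail: "(\<Sum>k\<in>{k. k \<le> t \<and> \<not> k \<le> M}. bw t p k) \<le> (\<Sum>k\<in>{k. k \<le> t \<and> \<not> k \<le> M}. bw t p k * (real k - c)^2 / (d+s)^2)"
  proof (rule sum_mono)
    fix k assume "k \<in> {k. k \<le> t \<and> \<not> k \<le> M}"
    then have "real k \<ge> real M + 1" by auto
    then have "real k - c \<ge> d + s" using Md by (simp add: c_def)
    then have "(d+s)^2 \<le> (real k - c)^2" using d s0 by (intro power_mono) auto
    then have "1 \<le> (real k - c)^2 / (d+s)^2" using dpos by simp
    then show "bw t p k \<le> bw t p k * (real k - c)^2 / (d+s)^2"
      using mult_left_mono[OF \<open>1 \<le> (real k - c)^2 / (d+s)^2\<close> bw_nonneg[OF p, of t k]] by simp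
  qed
  also have "\<dots> \<le> (\<Sum>k\<le>t. bw t p k * (real k - c)^2 / (d+s)^2)"
    by (rule sum_mono2) (auto intro!: divide_nonneg_nonneg mult_nonneg_nonneg bw_nonneg p)
  also have "\<dots> = (V + s^2) / (d+s)^2"
    by (simp add: sum_divide_distrib[symmetric] bsum_sq V_def c_def)
  also have "\<dots> = V / (V + d^2)"
  proof -
    have e1: "V + s^2 = V * (V + d^2) / d^2" using d by (simp add: s_def field_simps power2_eq_square)
    have e2: "(d+s)^2 = (V + d^2)^2 / d^2" using d by (simp add: s_def field_simps power2_eq_square)
    have pos: "V + d^2 > 0" using d V0 by (simp add: add_nonneg_pos)
    have gen: "\<And>X D. X > 0 \<Longrightarrow> D > 0 \<Longrightarrow> V * X / D / (X^2 / D) = V / X"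
      by (simp add: power2_eq_square field_simps)
    have "d^2 > 0" using d by simp
    show ?thesis unfolding e1 e2 using gen[OF pos \<open>d^2 > 0\<close>] .
  qed
  finally have "(\<Sum>k\<in>{k. k \<le> t \<and> \<not> k \<le> M}. bw t p k) \<le> V / (V + d^2)" .
  then have "(\<Sum>k\<in>{k. k \<le> t \<and> k \<le> M}. bw t p k) \<ge> 1 - V / (V + d^2)"
    using split bsum0[of t p] by linarith
  also have "1 - V / (V + d^2) = d^2 / (V + d^2)"
  proof -
    have pos2: "V + d^2 > 0" using d V0 by (simp add: add_nonneg_pos)
    then have "1 - V / (V + d^2) = (V + d^2) / (V + d^2) - V / (V + d^2)" by simp
    also have "\<dots> = ((V + d^2) - V) / (V + d^2)" by (rule diff_divide_distrib[symmetric])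
    finally show ?thesis by simp
  qed
  finally show ?thesis by (simp add: V_def)
qed



lemma prob_finite_sum:
  assumes "finite D" "set_pmf M \<subseteq> D"
  shows "measure_pmf.prob M A = (\<Sum>x\<in>D. pmf M x * indicator A x)"
proof -
  have "measure_pmf.prob M A = measure_pmf.prob M (A \<inter> set_pmf M)" by (simp add: measure_Int_set_pmf)
  also have "\<dots> = sum (pmf M) (A \<inter> set_pmf M)"
    using assms by (intro measure_measure_pmf_finite) (meson finite_Int finite_subset)
  also have "\<dots> = sum (pmf M) (D \<inter> A)"
    using assms by (intro sum.mono_neutral_left) (auto simp: set_pmf_iff)
  also have "\<dots> = (\<Sum>x\<in>D. pmf M x * indicator A x)"
    using assms by (simp add: sum.inter_restrict indicator_def)
  finally show ?thesis .
qed

lemma prob_G: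
  assumes fin: "finite Tr" and p: "0 \<le> p" "p \<le> 1"
  shows "measure_pmf.prob (map_pmf (\<lambda>f. {T \<in> Tr. f T}) (Pi_pmf Tr False (\<lambda>_. bernoulli_pmf p))) {H. Q H}
       = (\<Sum>B\<in>Pow Tr. p ^ card B * (1-p) ^ (card Tr - card B) * indicator {H. Q H} B)"
proof -
  let ?P = "Pi_pmf Tr False (\<lambda>_. bernoulli_pmf p)"
  let ?F = "\<lambda>f. {T \<in> Tr. f T}"
  let ?e = "\<lambda>B x. x \<in> B"
  define D where "D = ?e ` Pow Tr"
  have inj: "inj_on ?e (Pow Tr)"
    by (rule inj_onI) (auto simp: fun_eq_iff)
  have sub: "set_pmf ?P \<subseteq> D"
  proof
    fix f assume "f \<in> set_pmf ?P"
    then have "\<forall>x. x \<notin> Tr \<longrightarrow> f x = False" using set_Pi_pmf_subset[OF fin, of False "\<lambda>_. bernoulli_pmf p"] by blast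
    then have "f = ?e {x\<in>Tr. f x}" by (auto simp: fun_eq_iff)
    then show "f \<in> D" unfolding D_def by blast
  qed
  have "measure_pmf.prob (map_pmf ?F ?P) {H. Q H} = measure_pmf.prob ?P (?F -` {H. Q H})" by simp
  also have "\<dots> = (\<Sum>f\<in>D. pmf ?P f * indicator (?F -` {H. Q H}) f)"
    using sub fin by (intro prob_finite_sum) (auto simp: D_def)
  also have "\<dots> = (\<Sum>B\<in>Pow Tr. pmf ?P (?e B) * indicator (?F -` {H. Q H}) (?e B))"
    unfolding D_def by (rule sum.reindex[OF inj, unfolded o_def])
  also have "\<dots> = (\<Sum>B\<in>Pow Tr. p ^ card B * (1-p) ^ (card Tr - card B) * indicator {H. Q H} B)"
  proof (rule sum.cong[OF refl])
    fix B assume B: "B \<in> Pow Tr"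
    have FB: "?F (?e B) = B" using B by auto
    have "pmf ?P (?e B) = (\<Prod>x\<in>Tr. pmf (bernoulli_pmf p) (x \<in> B))"
      using B fin by (intro pmf_Pi') auto
    also have "\<dots> = (\<Prod>x\<in>B. pmf (bernoulli_pmf p) (x \<in> B)) * (\<Prod>x\<in>Tr - B. pmf (bernoulli_pmf p) (x \<in> B))"
      using B fin by (metis PowD prod.subset_diff mult.commute)
    also have "\<dots> = p ^ card B * (1-p) ^ (card Tr - card B)"
      using B fin p by (simp add: card_Diff_subset finite_subset)
    finally show "pmf ?P (?e B) * indicator (?F -` {H. Q H}) (?e B) = p ^ card B * (1-p) ^ (card Tr - card B) * indicator {H. Q H} B"
      using FB by (simp add: indicator_def)
  qed
  finally show ?thesis .
qed

lemma fiber_card: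
  assumes fin: "finite A" and B: "B \<subseteq> A" "card B = k"
  shows "card {\<pi> \<in> permutations_of_set A. set (take k \<pi>) = B} = fact k * fact (card A - k)"
proof -
  let ?F = "{\<pi> \<in> permutations_of_set A. set (take k \<pi>) = B}"
  let ?X = "permutations_of_set B \<times> permutations_of_set (A - B)"
  let ?h = "\<lambda>(a, b). a @ b"
  have lenB: "\<And>a. a \<in> permutations_of_set B \<Longrightarrow> length a = k"
    using B by (auto simp: permutations_of_set_def distinct_card[symmetric])
  have inj: "inj_on ?h ?X"
  proof (rule inj_onI)
    fix x y assume "x \<in> ?X" "y \<in> ?X" "?h x = ?h y"
    then show "x = y" using lenB by (cases x; cases y) (auto simp: append_eq_append_conv)
  qed
  have img: "?h ` ?X = ?F"
  proof
    show "?h ` ?X \<subseteq> ?F"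
    proof clarify
      fix a b assume a: "a \<in> permutations_of_set B" and b: "b \<in> permutations_of_set (A - B)"
      have "take k (a @ b) = a" using lenB[OF a] by simp
      then show "a @ b \<in> permutations_of_set A \<and> set (take k (a @ b)) = B"
        using a b B by (auto simp: permutations_of_set_def)
    qed
  next
    show "?F \<subseteq> ?h ` ?X"
    proof
      fix \<pi> assume "\<pi> \<in> ?F"
      then have pi: "\<pi> \<in> permutations_of_set A" and t: "B = set (take k \<pi>)" by auto
      have d: "distinct \<pi>" "set \<pi> = A" using pi by (auto simp: permutations_of_set_def)
      have dd: "distinct (take k \<pi> @ drop k \<pi>)" using d by simp
      have "set (take k \<pi>) \<union> set (drop k \<pi>) = A" using d by (metis set_append append_take_drop_id)
      moreover have "set (take k \<pi>) \<inter> set (drop k \<pi>) = {}" using dd by (simp only: distinct_append)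
      ultimately have "set (drop k \<pi>) = A - B" using t by blast
      then have "(take k \<pi>, drop k \<pi>) \<in> ?X" using d t by (auto simp: permutations_of_set_def)
      moreover have "\<pi> = ?h (take k \<pi>, drop k \<pi>)" by simp
      ultimately show "\<pi> \<in> ?h ` ?X" by blast
    qed
  qed
  have "card ?F = card ?X" using card_image[OF inj] img by simp
  also have "\<dots> = fact k * fact (card A - k)"
    using fin B by (simp add: card_cartesian_product card_Diff_subset finite_subset)
  finally show ?thesis .
qed

lemma perm_sum:
  fixes g :: "'a set \<Rightarrow> real"
  assumes fin: "finite A" and k: "k \<le> card A"
  shows "(\<Sum>\<pi>\<in>permutations_of_set A. g (set (take k \<pi>)))
       = fact k * fact (card A - k) * (\<Sum>B\<in>{B. B \<subseteq> A \<and> card B = k}. g B)"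
proof -
  let ?T = "{B. B \<subseteq> A \<and> card B = k}"
  have fT: "finite ?T" using fin by simp
  have im: "(\<lambda>\<pi>. set (take k \<pi>)) ` permutations_of_set A \<subseteq> ?T"
  proof clarify
    fix \<pi> assume pi: "\<pi> \<in> permutations_of_set A"
    have d: "distinct \<pi>" "set \<pi> = A" using pi by (auto simp: permutations_of_set_def)
    have "length \<pi> = card A" using d distinct_card by metis
    then show "set (take k \<pi>) \<subseteq> A \<and> card (set (take k \<pi>)) = k"
      using d k by (auto simp: distinct_card dest: in_set_takeD)
  qed
  have "(\<Sum>\<pi>\<in>permutations_of_set A. g (set (take k \<pi>)))
      = (\<Sum>B\<in>?T. \<Sum>\<pi>\<in>{\<pi>. \<pi> \<in> permutations_of_set A \<and> set (take k \<pi>) = B}. g (set (take k \<pi>)))"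
    by (rule sum.group[OF finite_permutations_of_set fT im, symmetric])
  also have "\<dots> = (\<Sum>B\<in>?T. fact k * fact (card A - k) * g B)"
  proof (rule sum.cong[OF refl])
    fix B assume "B \<in> ?T"
    then have "card {\<pi> \<in> permutations_of_set A. set (take k \<pi>) = B} = fact k * fact (card A - k)"
      using fiber_card fin by blast
    then show "(\<Sum>\<pi>\<in>{\<pi>. \<pi> \<in> permutations_of_set A \<and> set (take k \<pi>) = B}. g (set (take k \<pi>))) = fact k * fact (card A - k) * g B"
      by (simp add: of_nat_mult)
  qed
  also have "\<dots> = fact k * fact (card A - k) * (\<Sum>B\<in>?T. g B)" by (simp add: sum_distrib_left)
  finally show ?thesis .
qed



lemma ch2: "2 * real (n choose 2) = real n * (real n - 1)"
proof (induction n)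
  case 0 then show ?case by simp
next
  case (Suc n)
  have "Suc n choose 2 = n + (n choose 2)" by (simp add: numeral_2_eq_2)
  then show ?case using Suc by (simp add: algebra_simps)
qed

lemma ch3: "6 * real (n choose 3) = real n * (real n - 1) * (real n - 2)"
proof (induction n)
  case 0 then show ?case by simp
next
  case (Suc n)
  have "Suc n choose 3 = (n choose 2) + (n choose 3)" by (simp add: numeral_3_eq_3 numeral_2_eq_2)
  then show ?case using Suc ch2[of n] by (simp add: algebra_simps)
qed

lemma finite_tri_graph: "finite (triangles (graph_of n S))" and card_tri_graph: "card (triangles (graph_of n S)) \<le> n choose 3"
proof -
  have sub: "triangles (graph_of n S) \<subseteq> {T. T \<subseteq> {..<n} \<and> card T = 3}"
    using tri_graph_sub by (auto simp: triangles_def)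
  show "finite (triangles (graph_of n S))" by (rule finite_subset[OF sub]) simp
  have "card (triangles (graph_of n S)) \<le> card {T. T \<subseteq> {..<n} \<and> card T = 3}"
    by (rule card_mono[OF _ sub]) simp
  also have "\<dots> = n choose 3" using n_subsets[of "{..<n}" 3] by simp
  finally show "card (triangles (graph_of n S)) \<le> n choose 3" .
qed


lemma main_bound:
  fixes \<alpha> :: real
  assumes \<alpha>: "0 < \<alpha>" "\<alpha> < 1" and n: "n \<ge> 3"
    and S: "S \<in> ordered_systems n m" and mono: "monotone_increasing n P"
  shows "measure_pmf.prob (R_dist n S (nat \<lfloor>\<alpha> * N_of n\<rfloor>)) {x. \<not> P (sys_union S x)}
          \<le> ((\<alpha>+3)/\<alpha>) * measure_pmf.prob (Gstar_dist n S (\<alpha> / real n)) {H. \<not> P (Some (set S \<union> H))}"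
proof -
  define E where "E = graph_of n (set S)"
  define Tr where "Tr = triangles E"
  define t where "t = card Tr"
  define p where "p = \<alpha> / real n"
  define M where "M = nat \<lfloor>\<alpha> * N_of n\<rfloor>"
  define Pi where "Pi = permutations_of_set Tr"
  define evR where "evR = (\<lambda>\<pi>. indicator {\<pi>. \<not> P (sys_union S (greedy E \<pi> M))} \<pi> :: real)"
  define g where "g = (\<lambda>B. indicator {H. \<not> P (Some (set S \<union> H))} (delete_conflicts B) :: real)"
  have fTr: "finite Tr" by (simp add: Tr_def E_def finite_tri_graph)
  have p01: "0 \<le> p" "p \<le> 1" using \<alpha> n by (auto simp: p_def)
  have psS: "partial_system n (set S)" using S by (simp add: ordered_systems_def)
  have fPi: "finite Pi" "Pi \<noteq> {}" "card Pi = fact t" using fTr by (auto simp: Pi_def t_def)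
  have g01: "0 \<le> g B" "g B \<le> 1" for B by (auto simp: g_def indicator_def)
  have e01: "0 \<le> evR \<pi>" for \<pi> by (auto simp: evR_def indicator_def)

  have L: "measure_pmf.prob (R_dist n S M) {x. \<not> P (sys_union S x)} = (\<Sum>\<pi>\<in>Pi. evR \<pi>) / fact t"
  proof -
    have "R_dist n S M = map_pmf (\<lambda>\<pi>. greedy E \<pi> M) (pmf_of_set Pi)"
      unfolding R_dist_def Pi_def using trp_greedy[OF fTr, of E M] by (simp add: E_def Tr_def)
    then have "measure_pmf.prob (R_dist n S M) {x. \<not> P (sys_union S x)}
       = measure_pmf.prob (pmf_of_set Pi) {\<pi>. \<not> P (sys_union S (greedy E \<pi> M))}" by (simp add: vimage_def)
    also have "\<dots> = (\<Sum>\<pi>\<in>Pi. pmf (pmf_of_set Pi) \<pi> * evR \<pi>)"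
      using fPi unfolding evR_def by (intro prob_finite_sum) auto
    also have "\<dots> = (\<Sum>\<pi>\<in>Pi. evR \<pi> / fact t)"
      using fPi by (intro sum.cong) auto
    also have "\<dots> = (\<Sum>\<pi>\<in>Pi. evR \<pi>) / fact t" by (simp add: sum_divide_distrib)
    finally show ?thesis .
  qed

  have R: "measure_pmf.prob (Gstar_dist n S p) {H. \<not> P (Some (set S \<union> H))}
       = (\<Sum>k\<le>t. bw t p k * ((\<Sum>\<pi>\<in>Pi. g (set (take k \<pi>))) / fact t))"
  proof -
    have "measure_pmf.prob (Gstar_dist n S p) {H. \<not> P (Some (set S \<union> H))}
       = measure_pmf.prob (map_pmf (\<lambda>f. {T \<in> Tr. f T}) (Pi_pmf Tr False (\<lambda>_. bernoulli_pmf p)))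
           {H. \<not> P (Some (set S \<union> delete_conflicts H))}"
      unfolding Gstar_dist_def G_dist_def Tr_def E_def by (simp add: vimage_def)
    also have "\<dots> = (\<Sum>B\<in>Pow Tr. p ^ card B * (1-p) ^ (t - card B) * g B)"
      using prob_G[OF fTr p01] by (simp add: g_def t_def indicator_def)
    also have "\<dots> = (\<Sum>k\<le>t. \<Sum>B\<in>{B. B \<in> Pow Tr \<and> card B = k}. p ^ card B * (1-p) ^ (t - card B) * g B)"
    proof (rule sum.group[symmetric])
      show "finite (Pow Tr)" using fTr by simp
      show "finite {..t}" by simp
      show "card ` Pow Tr \<subseteq> {..t}" using fTr by (auto simp: t_def card_mono)
    qed
    also have "\<dots> = (\<Sum>k\<le>t. bw t p k * ((\<Sum>\<pi>\<in>Pi. g (set (take k \<pi>))) / fact t))"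
    proof (rule sum.cong[OF refl])
      fix k assume k: "k \<in> {..t}"
      have "(\<Sum>B\<in>{B. B \<in> Pow Tr \<and> card B = k}. p ^ card B * (1-p) ^ (t - card B) * g B)
          = p ^ k * (1-p) ^ (t - k) * (\<Sum>B\<in>{B. B \<subseteq> Tr \<and> card B = k}. g B)"
        by (simp add: sum_distrib_left)
      also have "(\<Sum>B\<in>{B. B \<subseteq> Tr \<and> card B = k}. g B) = (\<Sum>\<pi>\<in>Pi. g (set (take k \<pi>))) / (fact k * fact (t - k))"
        using perm_sum[OF fTr, of k g] k by (simp add: Pi_def t_def field_simps)
      also have "p ^ k * (1-p) ^ (t - k) * ((\<Sum>\<pi>\<in>Pi. g (set (take k \<pi>))) / (fact k * fact (t - k)))
          = bw t p k * ((\<Sum>\<pi>\<in>Pi. g (set (take k \<pi>))) / fact t)"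
        using k by (simp add: bw_def binomial_fact field_simps)
      finally show "(\<Sum>B\<in>{B. B \<in> Pow Tr \<and> card B = k}. p ^ card B * (1-p) ^ (t - card B) * g B)
          = bw t p k * ((\<Sum>\<pi>\<in>Pi. g (set (take k \<pi>))) / fact t)" .
    qed
    finally show ?thesis .
  qed

  have key: "evR \<pi> \<le> g (set (take k \<pi>))" if pi: "\<pi> \<in> Pi" and kM: "k \<le> M" for \<pi> k
  proof (cases "\<not> P (sys_union S (greedy E \<pi> M))")
    case False then show ?thesis using g01 by (simp add: evR_def)
  next
    case True
    have PN: "P None" using mono by (simp add: monotone_increasing_def)
    then obtain L where gL: "greedy E \<pi> M = Some L" using True by (cases "greedy E \<pi> M") auto
    have bad: "\<not> P (Some (set S \<union> set L))" using True gL by simp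
    have props: "set L \<subseteq> triangles E" "\<forall>T\<in>set L. \<forall>T'\<in>set L. T \<noteq> T' \<longrightarrow> pairs_of T \<inter> pairs_of T' = {}"
      using greedy_props[OF gL] by auto
    have psL: "partial_system n (set S \<union> set L)"
      using partial_union[OF psS] props by (simp add: E_def)
    have setpi: "set \<pi> = Tr" using pi by (simp add: Pi_def permutations_of_set_def)
    have sub: "delete_conflicts (set (take k \<pi>)) \<subseteq> set L"
    proof
      fix T assume T: "T \<in> delete_conflicts (set (take k \<pi>))"
      then have T1: "T \<in> set (take k \<pi>)" and T2: "\<forall>T'\<in>set (take k \<pi>). T' \<noteq> T \<longrightarrow> card (T \<inter> T') \<le> 1"
        by (auto simp: delete_conflicts_def)
      have "T \<in> triangles E" using T1 setpi in_set_takeD Tr_def by fastforce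
      then show "T \<in> set L" using greedy_key[OF gL kM T1 _ T2] by blast
    qed
    then have subA: "set S \<union> delete_conflicts (set (take k \<pi>)) \<subseteq> set S \<union> set L" by blast
    have psA: "partial_system n (set S \<union> delete_conflicts (set (take k \<pi>)))"
      by (rule partial_mono[OF psL subA])
    have "\<not> P (Some (set S \<union> delete_conflicts (set (take k \<pi>))))"
      using mono psA psL subA bad unfolding monotone_increasing_def by blast
    then have "g (set (take k \<pi>)) = 1" by (simp add: g_def)
    then show ?thesis by (simp add: evR_def indicator_def)
  qed

  have Pb: "(\<Sum>k\<in>{k. k \<le> t \<and> k \<le> M}. bw t p k) \<ge> \<alpha> / (\<alpha> + 3)"
  proof -
    have nr: "real n \<ge> 3" using n by simp
    have N: "N_of n = real n * (real n - 1) / 6" using ch2[of n] by (simp add: N_of_def)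
    have "real t \<le> real (n choose 3)" using card_tri_graph[of n "set S"] by (simp add: t_def Tr_def E_def)
    then have tb: "6 * real t \<le> real n * (real n - 1) * (real n - 2)" using ch3[of n] by linarith
    define \<mu> where "\<mu> = real t * p"
    have \<mu>0: "\<mu> \<ge> 0" using p01 by (simp add: \<mu>_def)
    have "6 * \<mu> * real n = \<alpha> * (6 * real t)" using nr by (simp add: \<mu>_def p_def)
    also have "\<dots> \<le> \<alpha> * (real n * (real n - 1) * (real n - 2))" using tb \<alpha> by simp
    finally have "6 * \<mu> * real n \<le> (\<alpha> * (real n - 1) * (real n - 2)) * real n" by (simp add: algebra_simps)
    then have \<mu>b: "6 * \<mu> \<le> \<alpha> * (real n - 1) * (real n - 2)" using nr by simp
    define d where "d = \<alpha> * N_of n - \<mu>"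
    have id1: "\<alpha> * (real n - 1) * (real n - 2) = \<alpha> * real n * (real n - 1) - 2 * (\<alpha> * (real n - 1))"
      by (simp add: algebra_simps)
    have id2: "\<alpha> * (real n * (real n - 1) / 6) = (\<alpha> * real n * (real n - 1)) / 6" by simp
    have db: "d \<ge> \<alpha> * (real n - 1) / 3" using \<mu>b id1 unfolding d_def N id2 by linarith
    have db0: "\<alpha> * (real n - 1) / 3 > 0" using \<alpha> nr by simp
    have d0: "d > 0" using db db0 by linarith
    have x0: "\<alpha> * N_of n \<ge> 0" using \<alpha> by (simp add: N_of_def)
    have "real M = real_of_int \<lfloor>\<alpha> * N_of n\<rfloor>" using x0 by (simp add: M_def)
    then have "real M > \<alpha> * N_of n - 1" by linarith
    then have Md: "real M + 1 - real t * p \<ge> d" by (simp add: d_def \<mu>_def)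
    define V where "V = real t * p * (1 - p)"
    have "V \<le> \<mu>" using p01 \<mu>0 unfolding V_def \<mu>_def by (simp add: mult_left_le)
    moreover have "\<alpha> * (real n - 1) \<ge> 0" using \<alpha> nr by simp
    ultimately have Vb: "6 * V \<le> \<alpha> * real n * (real n - 1)" using \<mu>b id1 by linarith
    have V0: "V \<ge> 0" using p01 by (simp add: V_def)
    have "(\<alpha> * (real n - 1) / 3)^2 \<le> d^2" using db db0 by (intro power_mono) auto
    moreover have "\<alpha> * (6 * V) \<le> \<alpha> * (\<alpha> * real n * (real n - 1))" using Vb \<alpha> by simp
    moreover have "\<alpha> * (\<alpha> * real n * (real n - 1)) \<le> 18 * (\<alpha> * (real n - 1) / 3)^2"
    proof -
      have h18: "18 * (a / 3)^2 = 2 * a^2" for a :: real by (simp add: power_divide)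
      have "18 * (\<alpha> * (real n - 1) / 3)^2 - \<alpha> * (\<alpha> * real n * (real n - 1)) = \<alpha>^2 * ((real n - 1) * (real n - 2))"
        unfolding h18 by (simp add: power2_eq_square algebra_simps)
      moreover have "\<alpha>^2 * ((real n - 1) * (real n - 2)) \<ge> 0" using nr by simp
      ultimately show ?thesis by linarith
    qed
    ultimately have ineq: "\<alpha> * V \<le> 3 * d^2" by linarith
    have bt: "(\<Sum>k\<in>{k. k \<le> t \<and> k \<le> M}. bw t p k) \<ge> d^2 / (V + d^2)"
      using binom_tail[OF p01 d0 Md] by (simp add: V_def)
    have pos: "V + d^2 > 0" using V0 d0 by (simp add: add_nonneg_pos)
    have "\<alpha> / (\<alpha> + 3) \<le> d^2 / (V + d^2)"
      using pos \<alpha> ineq by (simp add: field_simps)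
    then show ?thesis using bt by linarith
  qed

  define Lv where "Lv = (\<Sum>\<pi>\<in>Pi. evR \<pi>) / fact t"
  have Lv0: "Lv \<ge> 0" unfolding Lv_def using e01 by (intro divide_nonneg_nonneg sum_nonneg) auto
  have "(\<Sum>k\<le>t. bw t p k * ((\<Sum>\<pi>\<in>Pi. g (set (take k \<pi>))) / fact t))
      \<ge> (\<Sum>k\<in>{k. k \<le> t \<and> k \<le> M}. bw t p k * ((\<Sum>\<pi>\<in>Pi. g (set (take k \<pi>))) / fact t))"
    by (rule sum_mono2) (auto intro!: mult_nonneg_nonneg divide_nonneg_nonneg sum_nonneg bw_nonneg p01 g01)
  also have "(\<Sum>k\<in>{k. k \<le> t \<and> k \<le> M}. bw t p k * ((\<Sum>\<pi>\<in>Pi. g (set (take k \<pi>))) / fact t))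
      \<ge> (\<Sum>k\<in>{k. k \<le> t \<and> k \<le> M}. bw t p k * Lv)"
  proof (rule sum_mono)
    fix k assume "k \<in> {k. k \<le> t \<and> k \<le> M}"
    then have "(\<Sum>\<pi>\<in>Pi. evR \<pi>) \<le> (\<Sum>\<pi>\<in>Pi. g (set (take k \<pi>)))" using key by (intro sum_mono) auto
    then have "Lv \<le> (\<Sum>\<pi>\<in>Pi. g (set (take k \<pi>))) / fact t" unfolding Lv_def by (simp add: divide_right_mono)
    then show "bw t p k * Lv \<le> bw t p k * ((\<Sum>\<pi>\<in>Pi. g (set (take k \<pi>))) / fact t)"
      by (intro mult_left_mono bw_nonneg p01)
  qed
  also have "(\<Sum>k\<in>{k. k \<le> t \<and> k \<le> M}. bw t p k * Lv) = (\<Sum>k\<in>{k. k \<le> t \<and> k \<le> M}. bw t p k) * Lv"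
    by (simp add: sum_distrib_right)
  also have "\<dots> \<ge> \<alpha> / (\<alpha> + 3) * Lv" using Pb Lv0 by (intro mult_right_mono)
  finally have "\<alpha> / (\<alpha> + 3) * Lv \<le> measure_pmf.prob (Gstar_dist n S p) {H. \<not> P (Some (set S \<union> H))}"
    using R by simp
  then have "Lv \<le> ((\<alpha>+3)/\<alpha>) * measure_pmf.prob (Gstar_dist n S p) {H. \<not> P (Some (set S \<union> H))}"
    using \<alpha> by (simp add: field_simps)
  then show ?thesis using L by (simp add: Lv_def M_def p_def)
qed



theorem lemma2p10:
  fixes \<alpha> :: real
  assumes "0 < \<alpha>" and "\<alpha> < 1"
  shows "\<exists>C::real. \<exists>n0::nat. \<forall>n\<ge>n0. (n mod 6 = 1 \<or> n mod 6 = 3) \<longrightarrow>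
     (\<forall>m S P. real m \<le> N_of n - \<alpha> * N_of n \<longrightarrow> S \<in> ordered_systems n m \<longrightarrow>
        monotone_increasing n P \<longrightarrow>
        measure_pmf.prob (R_dist n S (nat \<lfloor>\<alpha> * N_of n\<rfloor>)) {x. \<not> P (sys_union S x)}
          \<le> C * measure_pmf.prob (Gstar_dist n S (\<alpha> / real n)) {H. \<not> P (Some (set S \<union> H))})"
proof (intro exI[of _ "(\<alpha>+3)/\<alpha>"] exI[of _ 3] allI impI)
  fix n m S P
  assume "3 \<le> n" and "S \<in> ordered_systems n m" and "monotone_increasing n P"
  then show "measure_pmf.prob (R_dist n S (nat \<lfloor>\<alpha> * N_of n\<rfloor>)) {x. \<not> P (sys_union S x)}
          \<le> (\<alpha>+3)/\<alpha> * measure_pmf.prob (Gstar_dist n S (\<alpha> / real n)) {H. \<not> P (Some (set S \<union> H))}"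
    using main_bound[OF assms] by blast
qed

end
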